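(* Let $m\ge1$, $b_1,\dots,b_m>0$, $\sigma_1,\dots,\sigma_m\ge0$, and $\phi(\lambda)=\frac12\lambda^2-\sum_{j=1}^mb_j\sqrt{\lambda^2+\sigma_j}$ for $\lambda\ge0$. Then: (1) $\phi$ has at most one critical point $\lambda_0\in(0,\infty)$; if it exists, $\phi'(\lambda)>0$ for $\lambda>\lambda_0$ and $\phi'(\lambda)<0$ for $0<\lambda<\lambda_0$, $\phi''(\lambda)>0$ for $\lambda>\lambda_0$, and $\phi''$ has at most one zero in $(0,\lambda_0)$. If no such $\lambda_0$ exists, then $\phi''(\lambda)\ge0$ for all $\lambda\ge0$. (2) $\bigl(\phi''(\lambda)/\phi'(\lambda)^3\bigr)'\le0$ for all $\lambda\ne\lambda_0$ (i.e. at all $\lambda>0$ where $\phi'(\lambda)\ne0$). (3) If $\lambda_0>0$ exists, then $\phi'(\lambda)=\lambda\int_{\lambda_0}^{\lambda}\sum_{j=1}^m\frac{b_js}{(s^2+\sigma_j)^{3/2}}\,ds$ for all $\lambda>0$; if it does not exist, then $\phi'(\lambda)\ge\lambda\int_0^\lambda\sum_{j=1}^m\frac{b_js}{(s^2+\sigma_j)^{3/2}}\,ds$ for all $\lambda>0$. *)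

theory Defs
  imports "HOL-Analysis.Analysis"
begin

text \<open>The function phi(lambda) = lambda^2/2 - sum_{j=1}^m b_j sqrt(lambda^2 + sigma_j),
  written as a function on all of the reals (it is even); derivatives are taken with deriv.\<close>
definition phi :: "nat \<Rightarrow> (nat \<Rightarrow> real) \<Rightarrow> (nat \<Rightarrow> real) \<Rightarrow> real \<Rightarrow> real" where
  "phi m b \<sigma> t = t\<^sup>2 / 2 - (\<Sum>j=1..m. b j * sqrt (t\<^sup>2 + \<sigma> j))"

end

theory Submission imports Defs begin

lemma d_sqrt:
  fixes c x :: real assumes "x\<^sup>2 + c > 0"
  shows "((\<lambda>x. sqrt (x\<^sup>2 + c)) has_real_derivative x / sqrt (x\<^sup>2 + c)) (at x)"
  using assms by (auto intro!: derivative_eq_intros simp: field_simps)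

lemma d_inv_pow:
  fixes c x :: real and n :: nat assumes "x\<^sup>2 + c > 0"
  shows "((\<lambda>x. 1 / sqrt (x\<^sup>2 + c) ^ n) has_real_derivative - real n * x / sqrt (x\<^sup>2 + c) ^ (n+2)) (at x)"
proof -
  have q: "sqrt (x\<^sup>2 + c) > 0" using assms by simp
  show ?thesis
    using assms q
    apply (auto intro!: derivative_eq_intros d_sqrt)
    apply (simp add: field_simps power_add)
    apply (cases n) apply auto
    done
qed

lemma powr32: "(y::real) > 0 \<Longrightarrow> y powr (3/2) = sqrt y ^ 3"
proof -
  assume y: "y > 0"
  have "y powr (3/2) = y powr (1 + 1/2)" by simp
  also have "\<dots> = y powr 1 * y powr (1/2)" by (rule powr_add)
  also have "\<dots> = y * sqrt y" using y by (simp add: powr_half_sqrt)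
  also have "\<dots> = sqrt y ^ 3" using y by (simp add: power3_eq_cube)
  finally show ?thesis .
qed

locale L =
  fixes m :: nat and b \<sigma> :: "nat \<Rightarrow> real"
  assumes m1: "m \<ge> 1"
    and bpos: "\<And>j. j \<in> {1..m} \<Longrightarrow> b j > 0"
    and sig: "\<And>j. j \<in> {1..m} \<Longrightarrow> \<sigma> j \<ge> 0"
begin

definition F where "F x = 1 - (\<Sum>j=1..m. b j / sqrt (x\<^sup>2 + \<sigma> j))"
definition F' where "F' x = (\<Sum>j=1..m. b j * x / sqrt (x\<^sup>2 + \<sigma> j) ^ 3)"
definition G where "G x = 1 - (\<Sum>j=1..m. b j * \<sigma> j / sqrt (x\<^sup>2 + \<sigma> j) ^ 3)"
definition H where "H x = (\<Sum>j=1..m. 3 * b j * \<sigma> j * x / sqrt (x\<^sup>2 + \<sigma> j) ^ 5)"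
definition ok where "ok x \<longleftrightarrow> (\<forall>j\<in>{1..m}. x\<^sup>2 + \<sigma> j > 0)"

lemma ok_ne: "x \<noteq> 0 \<Longrightarrow> ok x"
  unfolding ok_def using sig by (metis add_pos_nonneg zero_less_power2)

lemma open_ok: "open {x. ok x}"
proof -
  have "{x. ok x} = (\<Inter>j\<in>{1..m}. {x. 0 < x\<^sup>2 + \<sigma> j})" unfolding ok_def by auto
  also have "open \<dots>"
    by (intro open_INT finite_atLeastAtMost ballI open_Collect_less continuous_intros)
  finally show ?thesis .
qed

lemma ne: "{1..m} \<noteq> {}" using m1 by auto

lemma qpos: "ok x \<Longrightarrow> j \<in> {1..m} \<Longrightarrow> sqrt (x\<^sup>2 + \<sigma> j) > 0"
  unfolding ok_def by auto

lemma dphi: assumes "ok x" shows "(phi m b \<sigma> has_real_derivative x * F x) (at x)"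
proof -
  have e: "phi m b \<sigma> = (\<lambda>t. t\<^sup>2 / 2 - (\<Sum>j=1..m. b j * sqrt (t\<^sup>2 + \<sigma> j)))"
    by (rule ext) (simp add: phi_def)
  have "\<And>j. j \<in> {1..m} \<Longrightarrow> ((\<lambda>t. b j * sqrt (t\<^sup>2 + \<sigma> j)) has_real_derivative b j * (x / sqrt (x\<^sup>2 + \<sigma> j))) (at x)"
    using assms unfolding ok_def by (intro DERIV_cmult d_sqrt) auto
  then have s: "((\<lambda>t. \<Sum>j=1..m. b j * sqrt (t\<^sup>2 + \<sigma> j)) has_real_derivative (\<Sum>j=1..m. b j * (x / sqrt (x\<^sup>2 + \<sigma> j)))) (at x)"
    by (rule DERIV_sum)
  have "((\<lambda>t. t\<^sup>2 / 2) has_real_derivative x) (at x)" by (auto intro!: derivative_eq_intros)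
  from DERIV_diff[OF this s] have "((\<lambda>t. t\<^sup>2 / 2 - (\<Sum>j=1..m. b j * sqrt (t\<^sup>2 + \<sigma> j))) has_real_derivative x - (\<Sum>j=1..m. b j * (x / sqrt (x\<^sup>2 + \<sigma> j)))) (at x)" .
  moreover have "x - (\<Sum>j=1..m. b j * (x / sqrt (x\<^sup>2 + \<sigma> j))) = x * F x"
    unfolding F_def by (simp add: right_diff_distrib sum_distrib_left mult.commute)
  ultimately show ?thesis using e by simp
qed

lemma dF: assumes "ok x" shows "(F has_real_derivative F' x) (at x)"
proof -
  have e: "F = (\<lambda>t. 1 - (\<Sum>j=1..m. b j * (1 / sqrt (t\<^sup>2 + \<sigma> j) ^ 1)))"
    by (rule ext) (simp add: F_def)
  have "\<And>j. j \<in> {1..m} \<Longrightarrow> ((\<lambda>t. b j * (1 / sqrt (t\<^sup>2 + \<sigma> j) ^ 1)) has_real_derivative b j * (- real 1 * x / sqrt (x\<^sup>2 + \<sigma> j) ^ (1+2))) (at x)"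
    using assms unfolding ok_def by (intro DERIV_cmult d_inv_pow) auto
  then have s: "((\<lambda>t. \<Sum>j=1..m. b j * (1 / sqrt (t\<^sup>2 + \<sigma> j) ^ 1)) has_real_derivative (\<Sum>j=1..m. b j * (- real 1 * x / sqrt (x\<^sup>2 + \<sigma> j) ^ (1+2)))) (at x)"
    by (rule DERIV_sum)
  have "((\<lambda>t. 1 - (\<Sum>j=1..m. b j * (1 / sqrt (t\<^sup>2 + \<sigma> j) ^ 1))) has_real_derivative 0 - (\<Sum>j=1..m. b j * (- real 1 * x / sqrt (x\<^sup>2 + \<sigma> j) ^ (1+2)))) (at x)"
    by (rule DERIV_diff[OF DERIV_const s])
  moreover have "0 - (\<Sum>j=1..m. b j * (- real 1 * x / sqrt (x\<^sup>2 + \<sigma> j) ^ (1+2))) = F' x"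
    unfolding F'_def apply (simp add: sum_negf[symmetric])
    apply (intro sum.cong refl)
    using assms by (auto simp: ok_def power3_eq_cube)
  ultimately show ?thesis using e by simp
qed

lemma dG: assumes "ok x" shows "(G has_real_derivative H x) (at x)"
proof -
  have e: "G = (\<lambda>t. 1 - (\<Sum>j=1..m. (b j * \<sigma> j) * (1 / sqrt (t\<^sup>2 + \<sigma> j) ^ 3)))"
    by (rule ext) (simp add: G_def)
  have "\<And>j. j \<in> {1..m} \<Longrightarrow> ((\<lambda>t. (b j * \<sigma> j) * (1 / sqrt (t\<^sup>2 + \<sigma> j) ^ 3)) has_real_derivative (b j * \<sigma> j) * (- real 3 * x / sqrt (x\<^sup>2 + \<sigma> j) ^ (3+2))) (at x)"
    using assms unfolding ok_def by (intro DERIV_cmult d_inv_pow) auto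
  then have s: "((\<lambda>t. \<Sum>j=1..m. (b j * \<sigma> j) * (1 / sqrt (t\<^sup>2 + \<sigma> j) ^ 3)) has_real_derivative (\<Sum>j=1..m. (b j * \<sigma> j) * (- real 3 * x / sqrt (x\<^sup>2 + \<sigma> j) ^ (3+2)))) (at x)"
    by (rule DERIV_sum)
  have "((\<lambda>t. 1 - (\<Sum>j=1..m. (b j * \<sigma> j) * (1 / sqrt (t\<^sup>2 + \<sigma> j) ^ 3))) has_real_derivative 0 - (\<Sum>j=1..m. (b j * \<sigma> j) * (- real 3 * x / sqrt (x\<^sup>2 + \<sigma> j) ^ (3+2)))) (at x)"
    by (rule DERIV_diff[OF DERIV_const s])
  moreover have "0 - (\<Sum>j=1..m. (b j * \<sigma> j) * (- real 3 * x / sqrt (x\<^sup>2 + \<sigma> j) ^ (3+2))) = H x"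
    unfolding H_def by (simp add: sum_negf[symmetric] mult_ac)
  ultimately show ?thesis using e by simp
qed

lemma G_eq: assumes "ok x" shows "G x = F x + x * F' x"
proof -
  have "(\<Sum>j=1..m. b j * \<sigma> j / sqrt (x\<^sup>2 + \<sigma> j) ^ 3) =
        (\<Sum>j=1..m. b j / sqrt (x\<^sup>2 + \<sigma> j) - x * (b j * x / sqrt (x\<^sup>2 + \<sigma> j) ^ 3))"
  proof (rule sum.cong)
    fix j assume j: "j \<in> {1..m}"
    define q where "q = sqrt (x\<^sup>2 + \<sigma> j)"
    have xj: "x\<^sup>2 + \<sigma> j > 0" using assms j unfolding ok_def by auto
    have q: "q > 0" "q^2 = x\<^sup>2 + \<sigma> j" using xj unfolding q_def by auto
    have "b j * \<sigma> j / q ^ 3 = (b j * q^2 - x * (b j * x)) / q ^ 3"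
      using q(2) by (simp add: algebra_simps power2_eq_square)
    also have "\<dots> = b j / q - x * (b j * x / q ^ 3)"
      using q(1) by (simp add: field_simps power2_eq_square power3_eq_cube)
    finally show "b j * \<sigma> j / sqrt (x\<^sup>2 + \<sigma> j) ^ 3 = b j / sqrt (x\<^sup>2 + \<sigma> j) - x * (b j * x / sqrt (x\<^sup>2 + \<sigma> j) ^ 3)"
      unfolding q_def .
  qed simp
  then show ?thesis unfolding G_def F_def F'_def
    by (simp add: sum_subtractf sum_distrib_left)
qed

lemma dxF: assumes "ok x" shows "((\<lambda>x. x * F x) has_real_derivative G x) (at x)"
  using dF[OF assms] G_eq[OF assms]
  by (auto intro!: derivative_eq_intros)


lemma deriv_phi: "ok x \<Longrightarrow> deriv (phi m b \<sigma>) x = x * F x"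
  by (rule DERIV_imp_deriv[OF dphi])

lemma dd: assumes "ok x" shows "(deriv (phi m b \<sigma>) has_real_derivative G x) (at x)"
  by (rule has_field_derivative_transform_within_open[OF dxF[OF assms] open_ok])
     (use assms deriv_phi in auto)

lemma deriv_dd: "ok x \<Longrightarrow> deriv (deriv (phi m b \<sigma>)) x = G x"
  by (rule DERIV_imp_deriv[OF dd])

lemma F_mono: assumes "0 < x" "x < y" shows "F x < F y"
proof -
  have "\<And>j. j\<in>{1..m} \<Longrightarrow> b j / sqrt (y\<^sup>2 + \<sigma> j) < b j / sqrt (x\<^sup>2 + \<sigma> j)"
  proof -
    fix j assume j: "j \<in> {1..m}"
    have qx: "sqrt (x\<^sup>2 + \<sigma> j) > 0" using qpos[OF ok_ne j] assms by auto
    have "x\<^sup>2 < y\<^sup>2" using assms by (intro power_strict_mono) auto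
    then have lt: "sqrt (x\<^sup>2 + \<sigma> j) < sqrt (y\<^sup>2 + \<sigma> j)" by simp
    show "b j / sqrt (y\<^sup>2 + \<sigma> j) < b j / sqrt (x\<^sup>2 + \<sigma> j)"
      using qx lt bpos[OF j] by (intro divide_strict_left_mono) auto
  qed
  then have "(\<Sum>j=1..m. b j / sqrt (y\<^sup>2 + \<sigma> j)) < (\<Sum>j=1..m. b j / sqrt (x\<^sup>2 + \<sigma> j))"
    by (intro sum_strict_mono finite_atLeastAtMost ne) auto
  then show ?thesis unfolding F_def by linarith
qed

lemma F'_pos: assumes "0 < x" shows "F' x > 0"
  unfolding F'_def
  by (intro sum_pos finite_atLeastAtMost ne divide_pos_pos mult_pos_pos bpos assms zero_less_power qpos ok_ne)
     (use assms in auto)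

lemma G_strict: assumes "0 < x" "x < y" "G x = 0" shows "G x < G y"
proof -
  have ex: "\<exists>j\<in>{1..m}. \<sigma> j > 0"
  proof (rule ccontr)
    assume "\<not> ?thesis"
    then have "\<And>j. j\<in>{1..m} \<Longrightarrow> \<sigma> j = 0" using sig by force
    then have "G x = 1" unfolding G_def by simp
    with assms show False by simp
  qed
  have le: "\<forall>j\<in>{1..m}. b j * \<sigma> j / sqrt (y\<^sup>2 + \<sigma> j) ^ 3 \<le> b j * \<sigma> j / sqrt (x\<^sup>2 + \<sigma> j) ^ 3"
  proof
    fix j assume j: "j \<in> {1..m}"
    have qx: "sqrt (x\<^sup>2 + \<sigma> j) > 0" using qpos[OF ok_ne j] assms by auto
    have "x\<^sup>2 < y\<^sup>2" using assms by (intro power_strict_mono) auto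
    then have lt: "sqrt (x\<^sup>2 + \<sigma> j) < sqrt (y\<^sup>2 + \<sigma> j)" by simp
    then have "sqrt (x\<^sup>2 + \<sigma> j) ^ 3 \<le> sqrt (y\<^sup>2 + \<sigma> j) ^ 3" using qx by (intro power_mono) auto
    then show "b j * \<sigma> j / sqrt (y\<^sup>2 + \<sigma> j) ^ 3 \<le> b j * \<sigma> j / sqrt (x\<^sup>2 + \<sigma> j) ^ 3"
      using qx bpos[OF j] sig[OF j] by (intro divide_left_mono) auto
  qed
  obtain k where k: "k \<in> {1..m}" "\<sigma> k > 0" using ex by blast
  have "b k * \<sigma> k / sqrt (y\<^sup>2 + \<sigma> k) ^ 3 < b k * \<sigma> k / sqrt (x\<^sup>2 + \<sigma> k) ^ 3"
  proof -
    have qx: "sqrt (x\<^sup>2 + \<sigma> k) > 0" using qpos[OF ok_ne k(1)] assms by auto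
    have "x\<^sup>2 < y\<^sup>2" using assms by (intro power_strict_mono) auto
    then have lt: "sqrt (x\<^sup>2 + \<sigma> k) < sqrt (y\<^sup>2 + \<sigma> k)" by simp
    then have l3: "sqrt (x\<^sup>2 + \<sigma> k) ^ 3 < sqrt (y\<^sup>2 + \<sigma> k) ^ 3" using qx by (intro power_strict_mono) auto
    have qy: "sqrt (y\<^sup>2 + \<sigma> k) > 0" using qpos[OF ok_ne k(1)] assms by auto
    show ?thesis
      using l3 qx qy bpos[OF k(1)] k(2) by (intro divide_strict_left_mono) auto
  qed
  then have "(\<Sum>j=1..m. b j * \<sigma> j / sqrt (y\<^sup>2 + \<sigma> j) ^ 3) < (\<Sum>j=1..m. b j * \<sigma> j / sqrt (x\<^sup>2 + \<sigma> j) ^ 3)"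
    using k(1) le by (intro sum_strict_mono_ex1) auto
  then show ?thesis unfolding G_def by linarith
qed

lemma F_large: "\<exists>T>0. \<forall>t\<ge>T. F t > 0"
proof -
  define B where "B = (\<Sum>j=1..m. b j)"
  have B: "B > 0" unfolding B_def by (intro sum_pos finite_atLeastAtMost ne bpos)
  show ?thesis
  proof (intro exI[of _ "B + 1"] conjI allI impI)
    show "B + 1 > 0" using B by simp
    fix t assume t: "B + 1 \<le> t"
    have "(\<Sum>j=1..m. b j / sqrt (t\<^sup>2 + \<sigma> j)) \<le> (\<Sum>j=1..m. b j / t)"
    proof (rule sum_mono)
      fix j assume j: "j \<in> {1..m}"
      have "sqrt (t\<^sup>2) \<le> sqrt (t\<^sup>2 + \<sigma> j)" by (intro real_sqrt_le_mono) (use sig[OF j] in simp)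
      then have tl: "t \<le> sqrt (t\<^sup>2 + \<sigma> j)" using t B by simp
      have tp: "t > 0" using t B by simp
      have "0 < sqrt (t\<^sup>2 + \<sigma> j) * t" using tl tp by (intro mult_pos_pos) linarith+
      then show "b j / sqrt (t\<^sup>2 + \<sigma> j) \<le> b j / t"
        using tl bpos[OF j] by (intro divide_left_mono) auto
    qed
    also have "\<dots> = B / t" unfolding B_def by (simp add: sum_divide_distrib)
    also have "\<dots> < 1" using t B by simp
    finally show "F t > 0" unfolding F_def by linarith
  qed
qed

lemma contF: "(\<And>x. x \<in> S \<Longrightarrow> ok x) \<Longrightarrow> continuous_on S F"
  by (intro continuous_at_imp_continuous_on ballI DERIV_isCont[OF dF]) auto

lemma ineq: assumes "0 < x" shows "H x * (x * F x) \<le> 3 * (G x)\<^sup>2"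
proof -
  define A where "A = (\<Sum>j=1..m. b j / sqrt (x\<^sup>2 + \<sigma> j) ^ 3)"
  define C where "C = (\<Sum>j=1..m. b j * \<sigma> j / sqrt (x\<^sup>2 + \<sigma> j) ^ 5)"
  have okx: "ok x" using assms ok_ne by auto
  have F'A: "F' x = x * A" unfolding F'_def A_def by (simp add: sum_distrib_left mult.commute)
  have HC: "H x = 3 * x * C" unfolding H_def C_def by (simp add: sum_distrib_left mult_ac)
  have xs: "\<And>j. j\<in>{1..m} \<Longrightarrow> 0 < x\<^sup>2 + \<sigma> j" using okx unfolding ok_def by auto
  have A0: "A \<ge> 0" unfolding A_def
    by (intro sum_nonneg divide_nonneg_pos) (auto simp: less_imp_le[OF bpos] xs)
  have C0: "C \<ge> 0" unfolding C_def
    by (intro sum_nonneg divide_nonneg_pos mult_nonneg_nonneg) (auto simp: less_imp_le[OF bpos] sig xs)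
  have CA: "C \<le> A" unfolding C_def A_def
  proof (rule sum_mono)
    fix j assume j: "j \<in> {1..m}"
    define q where "q = sqrt (x\<^sup>2 + \<sigma> j)"
    have xj: "x\<^sup>2 + \<sigma> j > 0" using okx j unfolding ok_def by auto
    have q: "q > 0" "q^2 = x\<^sup>2 + \<sigma> j" using xj unfolding q_def by auto
    have "b j * \<sigma> j \<le> b j * q^2" using q(2) bpos[OF j] by (intro mult_left_mono) auto
    then have "b j * \<sigma> j / q^5 \<le> b j * q^2 / q^5" using q by (intro divide_right_mono) auto
    also have "\<dots> = b j / q^3" using q(1) by (simp add: field_simps power2_eq_square power3_eq_cube
        power_numeral_reduce)
    finally show "b j * \<sigma> j / sqrt (x\<^sup>2 + \<sigma> j) ^ 5 \<le> b j / sqrt (x\<^sup>2 + \<sigma> j) ^ 3"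
      unfolding q_def .
  qed
  have GF: "G x = F x + x\<^sup>2 * A" using G_eq[OF okx] F'A by (simp add: power2_eq_square)
  show ?thesis
  proof (cases "F x \<le> 0")
    case True
    have "H x \<ge> 0" using HC assms C0 by simp
    moreover have "x * F x \<le> 0" using True assms by (simp add: mult_nonneg_nonpos)
    ultimately have "H x * (x * F x) \<le> 0" by (simp add: mult_nonneg_nonpos)
    then show ?thesis by (smt (verit) zero_le_power2)
  next
    case False
    define y where "y = x\<^sup>2 * A"
    have y0: "y \<ge> 0" unfolding y_def using A0 by simp
    have "H x * (x * F x) = 3 * (x\<^sup>2 * F x) * C" using HC by (simp add: power2_eq_square mult_ac)
    also have "\<dots> \<le> 3 * (x\<^sup>2 * F x) * A" using CA False by (intro mult_left_mono) auto
    also have "\<dots> = 3 * (F x * y)" unfolding y_def by (simp add: mult_ac)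
    also have "\<dots> \<le> 3 * (F x + y)\<^sup>2"
    proof -
      have "(F x + y)\<^sup>2 = (F x)\<^sup>2 + F x * y + y\<^sup>2 + F x * y" by (simp add: power2_eq_square algebra_simps)
      moreover have "F x * y \<ge> 0" using False y0 by simp
      ultimately show ?thesis by (smt (verit) zero_le_power2)
    qed
    finally show ?thesis using GF y_def by simp
  qed
qed


lemma F'_powr: assumes "ok x"
  shows "F' x = (\<Sum>j=1..m. b j * x / (x\<^sup>2 + \<sigma> j) powr (3/2))"
  unfolding F'_def
proof (rule sum.cong)
  fix j assume "j \<in> {1..m}"
  then have "x\<^sup>2 + \<sigma> j > 0" using assms unfolding ok_def by auto
  then show "b j * x / sqrt (x\<^sup>2 + \<sigma> j) ^ 3 = b j * x / (x\<^sup>2 + \<sigma> j) powr (3/2)"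
    by (simp add: powr32)
qed simp

lemma FTC: assumes "\<And>x. min a c \<le> x \<Longrightarrow> x \<le> max a c \<Longrightarrow> ok x"
  shows "(LBINT s=a..c. (\<Sum>j=1..m. b j * s / (s\<^sup>2 + \<sigma> j) powr (3/2))) = F c - F a"
proof (rule interval_integral_FTC_finite)
  have pos: "\<And>x j. x \<in> {min a c..max a c} \<Longrightarrow> j \<in> {1..m} \<Longrightarrow> x\<^sup>2 + \<sigma> j > 0"
    using assms unfolding ok_def by auto
  show "continuous_on {min a c..max a c} (\<lambda>s. \<Sum>j=1..m. b j * s / (s\<^sup>2 + \<sigma> j) powr (3/2))"
    using pos by (intro continuous_intros) (auto dest: pos)
next
  fix x assume x: "min a c \<le> x" "x \<le> max a c"
  have okx: "ok x" using assms x by auto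
  have "(F has_real_derivative (\<Sum>j=1..m. b j * x / (x\<^sup>2 + \<sigma> j) powr (3/2))) (at x)"
    using dF[OF okx] F'_powr[OF okx] by simp
  then show "(F has_vector_derivative (\<Sum>j=1..m. b j * x / (x\<^sup>2 + \<sigma> j) powr (3/2))) (at x within {min a c..max a c})"
    by (simp add: has_real_derivative_iff_has_vector_derivative has_vector_derivative_at_within)
qed

end
theorem lemma6p5:
  fixes m :: nat and b \<sigma> :: "nat \<Rightarrow> real"
  assumes "m \<ge> 1"
    and "\<And>j. j \<in> {1..m} \<Longrightarrow> b j > 0"
    and "\<And>j. j \<in> {1..m} \<Longrightarrow> \<sigma> j \<ge> 0"
  defines "\<phi> \<equiv> phi m b \<sigma>"
  shows
    "(\<forall>x y. 0 < x \<and> 0 < y \<and> deriv \<phi> x = 0 \<and> deriv \<phi> y = 0 \<longrightarrow> x = y) \<and>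
     (\<forall>l0 > 0. deriv \<phi> l0 = 0 \<longrightarrow>
        (\<forall>t > l0. deriv \<phi> t > 0) \<and>
        (\<forall>t. 0 < t \<and> t < l0 \<longrightarrow> deriv \<phi> t < 0) \<and>
        (\<forall>t > l0. deriv (deriv \<phi>) t > 0) \<and>
        (\<forall>x y. 0 < x \<and> x < l0 \<and> 0 < y \<and> y < l0 \<and>
               deriv (deriv \<phi>) x = 0 \<and> deriv (deriv \<phi>) y = 0 \<longrightarrow> x = y)) \<and>
     ((\<not> (\<exists>l0 > 0. deriv \<phi> l0 = 0)) \<longrightarrow> (\<forall>t \<ge> 0. deriv (deriv \<phi>) t \<ge> 0)) \<and>
     (\<forall>t > 0. deriv \<phi> t \<noteq> 0 \<longrightarrow>
        deriv (\<lambda>x. deriv (deriv \<phi>) x / (deriv \<phi> x) ^ 3) t \<le> 0) \<and>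
     (\<forall>l0 > 0. deriv \<phi> l0 = 0 \<longrightarrow>
        (\<forall>t > 0. deriv \<phi> t =
           t * (LBINT s=l0..t. (\<Sum>j=1..m. b j * s / (s\<^sup>2 + \<sigma> j) powr (3/2))))) \<and>
     ((\<not> (\<exists>l0 > 0. deriv \<phi> l0 = 0)) \<longrightarrow>
        (\<forall>t > 0. deriv \<phi> t \<ge>
           t * (LBINT s=0..t. (\<Sum>j=1..m. b j * s / (s\<^sup>2 + \<sigma> j) powr (3/2)))))"
  proof -
  interpret L m b \<sigma> using assms(1-3) by unfold_locales auto
  have pok: "\<And>x. 0 < x \<Longrightarrow> ok x" using ok_ne by auto
  have dp: "\<And>x. ok x \<Longrightarrow> deriv \<phi> x = x * F x" unfolding \<phi>_def using deriv_phi by auto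
  have ddp: "\<And>x. ok x \<Longrightarrow> deriv (deriv \<phi>) x = G x" unfolding \<phi>_def using deriv_dd by auto
  have zi: "\<And>x. 0 < x \<Longrightarrow> deriv \<phi> x = 0 \<longleftrightarrow> F x = 0" using dp pok by auto
  have uniqF: "\<And>x y. 0 < x \<Longrightarrow> 0 < y \<Longrightarrow> F x = 0 \<Longrightarrow> F y = 0 \<Longrightarrow> x = y"
    using F_mono by (metis less_irrefl linorder_neqE_linordered_idom)
  have P1: "\<forall>x y. 0 < x \<and> 0 < y \<and> deriv \<phi> x = 0 \<and> deriv \<phi> y = 0 \<longrightarrow> x = y"
    using zi uniqF by blast
  have P2: "\<forall>l0 > 0. deriv \<phi> l0 = 0 \<longrightarrow>
        (\<forall>t > l0. deriv \<phi> t > 0) \<and>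
        (\<forall>t. 0 < t \<and> t < l0 \<longrightarrow> deriv \<phi> t < 0) \<and>
        (\<forall>t > l0. deriv (deriv \<phi>) t > 0) \<and>
        (\<forall>x y. 0 < x \<and> x < l0 \<and> 0 < y \<and> y < l0 \<and>
               deriv (deriv \<phi>) x = 0 \<and> deriv (deriv \<phi>) y = 0 \<longrightarrow> x = y)"
  proof (intro allI impI)
    fix l0 :: real assume l0: "l0 > 0" "deriv \<phi> l0 = 0"
    then have Fl0: "F l0 = 0" using zi by auto
    have c1: "\<forall>t > l0. deriv \<phi> t > 0"
    proof (intro allI impI)
      fix t assume "t > l0"
      then have "F t > 0" "t > 0" using F_mono[of l0 t] Fl0 l0 by auto
      then show "deriv \<phi> t > 0" using dp pok by simp
    qed
    have c2: "\<forall>t. 0 < t \<and> t < l0 \<longrightarrow> deriv \<phi> t < 0"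
    proof (intro allI impI)
      fix t assume t: "0 < t \<and> t < l0"
      then have "F t < 0" using F_mono[of t l0] Fl0 by auto
      then show "deriv \<phi> t < 0" using dp pok t by (simp add: mult_pos_neg)
    qed
    have c3: "\<forall>t > l0. deriv (deriv \<phi>) t > 0"
    proof (intro allI impI)
      fix t assume "t > l0"
      then have t: "F t > 0" "t > 0" using F_mono[of l0 t] Fl0 l0 by auto
      then have "G t > 0" using G_eq[OF pok] F'_pos by (simp add: add_pos_pos)
      then show "deriv (deriv \<phi>) t > 0" using ddp pok t by simp
    qed
    have c4: "\<forall>x y. 0 < x \<and> x < l0 \<and> 0 < y \<and> y < l0 \<and>
               deriv (deriv \<phi>) x = 0 \<and> deriv (deriv \<phi>) y = 0 \<longrightarrow> x = y"
    proof (intro allI impI)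
      fix x y assume h: "0 < x \<and> x < l0 \<and> 0 < y \<and> y < l0 \<and>
               deriv (deriv \<phi>) x = 0 \<and> deriv (deriv \<phi>) y = 0"
      then have g: "G x = 0" "G y = 0" using ddp pok by auto
      show "x = y"
      proof (rule ccontr)
        assume "x \<noteq> y"
        then consider "x < y" | "y < x" by linarith
        then show False
        proof cases
          case 1 then show ?thesis using G_strict[of x y] g h by simp
        next
          case 2 then show ?thesis using G_strict[of y x] g h by simp
        qed
      qed
    qed
    show "(\<forall>t > l0. deriv \<phi> t > 0) \<and>
        (\<forall>t. 0 < t \<and> t < l0 \<longrightarrow> deriv \<phi> t < 0) \<and>
        (\<forall>t > l0. deriv (deriv \<phi>) t > 0) \<and>
        (\<forall>x y. 0 < x \<and> x < l0 \<and> 0 < y \<and> y < l0 \<and>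
               deriv (deriv \<phi>) x = 0 \<and> deriv (deriv \<phi>) y = 0 \<longrightarrow> x = y)"
      by (intro conjI c1 c2 c3 c4)
  qed
  have NC: "\<not> (\<exists>l0 > 0. deriv \<phi> l0 = 0) \<Longrightarrow>
     (\<forall>t>0. F t > 0) \<and> (\<forall>x. ok x) \<and> F 0 \<ge> 0 \<and> G 0 = F 0"
  proof -
    assume "\<not> (\<exists>l0 > 0. deriv \<phi> l0 = 0)"
    then have nz: "\<And>t. t > 0 \<Longrightarrow> F t \<noteq> 0" using zi by auto
    obtain T where T: "T > 0" "\<And>t. t \<ge> T \<Longrightarrow> F t > 0" using F_large by auto
    have Fp: "\<forall>t>0. F t > 0"
    proof (intro allI impI, rule ccontr)
      fix t :: real assume t: "t > 0" "\<not> F t > 0"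
      then have "F t \<le> 0" by simp
      moreover have "0 \<le> F (max t T)" using T(2)[of "max t T"] by simp
      moreover have "continuous_on {t..max t T} F" using t by (intro contF pok) auto
      ultimately obtain s where "t \<le> s" "s \<le> max t T" "F s = 0"
        using IVT'[of F t 0 "max t T"] by auto
      then show False using nz t by auto
    qed
    have sp: "\<And>j. j \<in> {1..m} \<Longrightarrow> \<sigma> j > 0"
    proof (rule ccontr)
      fix k assume k: "k \<in> {1..m}" "\<not> \<sigma> k > 0"
      then have s0: "\<sigma> k = 0" using sig[OF k(1)] by simp
      define t where "t = b k / 2"
      have t: "t > 0" using bpos[OF k(1)] unfolding t_def by simp
      have "b k / sqrt (t\<^sup>2 + \<sigma> k) \<le> (\<Sum>j=1..m. b j / sqrt (t\<^sup>2 + \<sigma> j))"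
        using k(1) by (intro member_le_sum) (auto intro!: divide_nonneg_nonneg add_nonneg_nonneg simp: less_imp_le[OF bpos] sig)
      moreover have "b k / sqrt (t\<^sup>2 + \<sigma> k) = 2" using s0 t unfolding t_def by simp
      ultimately have "F t \<le> -1" unfolding F_def by linarith
      then show False using Fp t by auto
    qed
    have okall: "\<forall>x. ok x" unfolding ok_def using sp by (auto intro: add_nonneg_pos)
    have F0: "F 0 \<ge> 0"
    proof (rule ccontr)
      assume "\<not> F 0 \<ge> 0"
      then have "F 0 \<le> 0" by simp
      moreover have "0 \<le> F T" using T by force
      moreover have "continuous_on {0..T} F" using okall by (intro contF) auto
      ultimately obtain s where "0 \<le> s" "s \<le> T" "F s = 0"
        using IVT'[of F 0 0 T] T by auto
      moreover have "s \<noteq> 0" using calculation \<open>\<not> F 0 \<ge> 0\<close> by auto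
      ultimately have "s > 0" by simp
      then show False using Fp \<open>F s = 0\<close> by auto
    qed
    have "(\<Sum>j=1..m. b j * \<sigma> j / sqrt (0\<^sup>2 + \<sigma> j) ^ 3) = (\<Sum>j=1..m. b j / sqrt (0\<^sup>2 + \<sigma> j))"
    proof (rule sum.cong)
      fix j assume j: "j \<in> {1..m}"
      have "sqrt (\<sigma> j) ^ 3 = \<sigma> j * sqrt (\<sigma> j)" using sp[OF j]
        by (simp add: power3_eq_cube)
      then show "b j * \<sigma> j / sqrt (0\<^sup>2 + \<sigma> j) ^ 3 = b j / sqrt (0\<^sup>2 + \<sigma> j)" using sp[OF j] by simp
    qed simp
    then have "G 0 = F 0" unfolding G_def F_def by simp
    then show ?thesis using Fp okall F0 by simp
  qed
  have P3: "(\<not> (\<exists>l0 > 0. deriv \<phi> l0 = 0)) \<longrightarrow> (\<forall>t \<ge> 0. deriv (deriv \<phi>) t \<ge> 0)"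
  proof (intro impI allI)
    fix t :: real assume nc: "\<not> (\<exists>l0 > 0. deriv \<phi> l0 = 0)" and t: "t \<ge> 0"
    note N = NC[OF nc]
    show "deriv (deriv \<phi>) t \<ge> 0"
    proof (cases "t = 0")
      case True then show ?thesis using N ddp by simp
    next
      case False
      then have "t > 0" using t by simp
      then have "G t > 0" using G_eq[OF pok] F'_pos N by (simp add: add_pos_pos)
      then show ?thesis using ddp N by simp
    qed
  qed
  have P4: "\<forall>t > 0. deriv \<phi> t \<noteq> 0 \<longrightarrow>
        deriv (\<lambda>x. deriv (deriv \<phi>) x / (deriv \<phi> x) ^ 3) t \<le> 0"
  proof (intro allI impI)
    fix t :: real assume t: "t > 0" "deriv \<phi> t \<noteq> 0"
    define p where "p = t * F t"
    have p0: "p \<noteq> 0" using t dp pok unfolding p_def by simp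
    have "((\<lambda>x. G x / (x * F x) ^ 3) has_real_derivative
       (H t * p ^ 3 - G t * (real 3 * (G t * p ^ (3 - Suc 0)))) / (p ^ 3 * p ^ 3)) (at t)"
    proof -
      have a: "((\<lambda>x. (x * F x) ^ 3) has_real_derivative real 3 * (G t * (t * F t) ^ (3 - Suc 0))) (at t)"
        by (rule DERIV_power[OF dxF[OF pok[OF t(1)]]])
      have nz: "(t * F t) ^ 3 \<noteq> 0" using p0 unfolding p_def by simp
      show ?thesis using DERIV_divide[OF dG[OF pok[OF t(1)]] a nz] unfolding p_def by simp
    qed
    then have "((\<lambda>x. deriv (deriv \<phi>) x / (deriv \<phi> x) ^ 3) has_real_derivative
       (H t * p ^ 3 - G t * (real 3 * (G t * p ^ (3 - Suc 0)))) / (p ^ 3 * p ^ 3)) (at t)"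
      by (rule has_field_derivative_transform_within_open[where S="{0<..}"])
         (use t dp ddp pok in auto)
    then have e: "deriv (\<lambda>x. deriv (deriv \<phi>) x / (deriv \<phi> x) ^ 3) t =
       (H t * p ^ 3 - G t * (real 3 * (G t * p ^ (3 - Suc 0)))) / (p ^ 3 * p ^ 3)"
      by (rule DERIV_imp_deriv)
    have num: "H t * p ^ 3 - G t * (real 3 * (G t * p ^ (3 - Suc 0))) = p\<^sup>2 * (H t * p - 3 * (G t)\<^sup>2)"
      by (simp add: power2_eq_square power3_eq_cube algebra_simps)
    have "H t * p - 3 * (G t)\<^sup>2 \<le> 0" using ineq[OF t(1)] unfolding p_def by simp
    then have "p\<^sup>2 * (H t * p - 3 * (G t)\<^sup>2) \<le> 0" by (simp add: mult_nonneg_nonpos)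
    moreover have "p ^ 3 * p ^ 3 > 0" using p0 by simp
    ultimately show "deriv (\<lambda>x. deriv (deriv \<phi>) x / (deriv \<phi> x) ^ 3) t \<le> 0"
      unfolding e num by (simp add: divide_nonpos_pos)
  qed
  have P5: "\<forall>l0 > 0. deriv \<phi> l0 = 0 \<longrightarrow>
        (\<forall>t > 0. deriv \<phi> t =
           t * (LBINT s=l0..t. (\<Sum>j=1..m. b j * s / (s\<^sup>2 + \<sigma> j) powr (3/2))))"
  proof (intro allI impI)
    fix l0 t :: real assume l0: "l0 > 0" "deriv \<phi> l0 = 0" and t: "t > 0"
    have "(LBINT s=l0..t. (\<Sum>j=1..m. b j * s / (s\<^sup>2 + \<sigma> j) powr (3/2))) = F t - F l0"
      by (rule FTC) (use l0 t in \<open>auto intro: pok\<close>)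
    then show "deriv \<phi> t = t * (LBINT s=l0..t. (\<Sum>j=1..m. b j * s / (s\<^sup>2 + \<sigma> j) powr (3/2)))"
      using zi[OF l0(1)] l0 dp pok t by simp
  qed
  have P6: "(\<not> (\<exists>l0 > 0. deriv \<phi> l0 = 0)) \<longrightarrow>
        (\<forall>t > 0. deriv \<phi> t \<ge>
           t * (LBINT s=0..t. (\<Sum>j=1..m. b j * s / (s\<^sup>2 + \<sigma> j) powr (3/2))))"
  proof (intro impI allI)
    fix t :: real assume nc: "\<not> (\<exists>l0 > 0. deriv \<phi> l0 = 0)" and t: "t > 0"
    note N = NC[OF nc]
    have e0: "(0::ereal) = ereal 0" by simp
    have "(LBINT s=0..t. (\<Sum>j=1..m. b j * s / (s\<^sup>2 + \<sigma> j) powr (3/2))) = F t - F 0"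
      unfolding e0 by (rule FTC) (use N in auto)
    moreover have "t * F 0 \<ge> 0" using N t by simp
    ultimately show "deriv \<phi> t \<ge> t * (LBINT s=0..t. (\<Sum>j=1..m. b j * s / (s\<^sup>2 + \<sigma> j) powr (3/2)))"
      using dp pok t by (simp add: right_diff_distrib)
  qed
  show ?thesis by (rule conjI[OF P1 conjI[OF P2 conjI[OF P3 conjI[OF P4 conjI[OF P5 P6]]]]])
qed

end
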